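(* Let $V$ be a finite set of $N \ge 2$ nodes, and let $G_X=(V,E_X)$ and $G_Y=(V,E_Y)$ be connected undirected graphs on $V$ with positive edge weights, with graph Laplacians $L_X$ and $L_Y$ respectively. Let $L_X^+$ and $L_Y^+$ denote their Moore–Penrose pseudoinverses. For distinct $p,q\in V$ let $e_{p,q}=e_p-e_q$, where $e_p\in\mathbb{R}^N$ is the $p$-th standard basis vector, and define the distance mapping distortion $$\gamma^F(p,q)=\frac{e_{p,q}^\top L_Y^+ e_{p,q}}{e_{p,q}^\top L_X^+ e_{p,q}},\qquad \gamma^F_{\min}=\min_{p,q\in V,\;p\neq q}\gamma^F(p,q).$$ Then $$\gamma^F_{\min}\;\ge\;\frac{1}{\lambda_{\max}\bigl(L_X^+ L_Y\bigr)},$$ where $\lambda_{\max}(\cdot)$ denotes the largest eigenvalue.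
   Context: For a weighted undirected graph with (symmetric, nonnegative) weight matrix $W$ and diagonal degree matrix $D$ (with $D_{pp}=\sum_q W_{pq}$), the Laplacian is $L=D-W$. The quantity $e_{p,q}^\top L^+ e_{p,q}$ is the effective-resistance distance between nodes $p$ and $q$. Here $G_X$ and $G_Y$ play the roles of an input manifold graph and an output manifold graph on the same node set (the same samples), and $\gamma^F(p,q)$ is the ratio of output to input effective-resistance distance. *)

theory Defs
  imports "HOL-Analysis.Analysis"
begin

text \<open>Weighted undirected graphs on the finite node type 'n are given by their
weight matrices W (symmetric, nonnegative); the edges are the pairs with positive weight.\<close>

definition weight_matrix :: "real^'n^'n \<Rightarrow> bool" where
  "weight_matrix W \<longleftrightarrow> (\<forall>p q. W $ p $ q = W $ q $ p) \<and> (\<forall>p q. 0 \<le> W $ p $ q)"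

definition graph_connected :: "real^'n^'n \<Rightarrow> bool" where
  "graph_connected W \<longleftrightarrow>
     (\<forall>p q. (p, q) \<in> {(a, b). 0 < W $ a $ b}\<^sup>*)"

definition degree_matrix :: "real^'n^'n \<Rightarrow> real^'n^'n" where
  "degree_matrix W = (\<chi> p q. if p = q then (\<Sum>r\<in>UNIV. W $ p $ r) else 0)"

definition laplacian :: "real^'n^'n \<Rightarrow> real^'n^'n" where
  "laplacian W = degree_matrix W - W"

definition is_pinv :: "real^'n^'n \<Rightarrow> real^'n^'n \<Rightarrow> bool" where
  "is_pinv A X \<longleftrightarrow> A ** X ** A = A \<and> X ** A ** X = X \<and>
     transpose (A ** X) = A ** X \<and> transpose (X ** A) = X ** A"

definition pinv :: "real^'n^'n \<Rightarrow> real^'n^'n" where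
  "pinv A = (THE X. is_pinv A X)"

definition std_basis :: "'n \<Rightarrow> real^'n" where
  "std_basis p = (\<chi> i. if i = p then 1 else 0)"

definition e_diff :: "'n \<Rightarrow> 'n \<Rightarrow> real^'n" where
  "e_diff p q = std_basis p - std_basis q"

definition eff_res :: "real^'n^'n \<Rightarrow> 'n \<Rightarrow> 'n \<Rightarrow> real" where
  "eff_res L p q = e_diff p q \<bullet> (pinv L *v e_diff p q)"

definition gammaF :: "real^'n^'n \<Rightarrow> real^'n^'n \<Rightarrow> 'n \<Rightarrow> 'n \<Rightarrow> real" where
  "gammaF LX LY p q = eff_res LY p q / eff_res LX p q"

definition gammaF_min :: "real^'n^'n \<Rightarrow> real^'n^'n \<Rightarrow> real" where
  "gammaF_min LX LY = Min {gammaF LX LY p q | p q. p \<noteq> q}"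

definition real_eigenvalues :: "real^'n^'n \<Rightarrow> real set" where
  "real_eigenvalues A = {c. \<exists>v. v \<noteq> 0 \<and> A *v v = c *\<^sub>R v}"

definition lambda_max :: "real^'n^'n \<Rightarrow> real" where
  "lambda_max A = Max (real_eigenvalues A)"

end

theory Submission
  imports Defs
begin

lemma lap_mv: "(laplacian W *v x) $ p = (\<Sum>r\<in>UNIV. W$p$r * (x$p - x$r))"
proof -
  have "(laplacian W *v x) $ p = (\<Sum>j\<in>UNIV. (if p = j then (\<Sum>r\<in>UNIV. W $ p $ r) else 0) * x$j - W$p$j * x$j)"
    by (simp add: laplacian_def degree_matrix_def matrix_vector_mult_def algebra_simps)
  also have "\<dots> = (\<Sum>j\<in>UNIV. (if p = j then (\<Sum>r\<in>UNIV. W $ p $ r) * x$j else 0)) - (\<Sum>j\<in>UNIV. W$p$j * x$j)"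
    by (subst sum_subtractf[symmetric]) (auto intro!: sum.cong)
  also have "\<dots> = (\<Sum>r\<in>UNIV. W $ p $ r) * x$p - (\<Sum>j\<in>UNIV. W$p$j * x$j)"
    by (simp only: sum.delta' finite UNIV_I if_True)
  also have "\<dots> = (\<Sum>r\<in>UNIV. W$p$r * (x$p - x$r))"
    by (simp add: sum_distrib_left sum_subtractf algebra_simps)
  finally show ?thesis .
qed

lemma lap_one: "laplacian W *v (1::real^'n) = 0"
  by (simp add: vec_eq_iff lap_mv)

lemma lap_sym: "weight_matrix W \<Longrightarrow> transpose (laplacian W) = laplacian W"
  by (auto simp: vec_eq_iff transpose_def laplacian_def degree_matrix_def weight_matrix_def)

lemma lap_quad:
  assumes "weight_matrix W"
  shows "x \<bullet> (laplacian W *v x) = (\<Sum>p\<in>UNIV. \<Sum>r\<in>UNIV. W$p$r * (x$p - x$r)^2) / 2"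
proof -
  have s: "\<And>p r. W$p$r = W$r$p" using assms by (simp add: weight_matrix_def)
  define S where "S = (\<Sum>p\<in>UNIV. \<Sum>r\<in>UNIV. W$p$r * (x$p * (x$p - x$r)))"
  have 1: "x \<bullet> (laplacian W *v x) = S"
    by (simp add: S_def inner_vec_def lap_mv sum_distrib_left algebra_simps)
  have "S = (\<Sum>r\<in>UNIV. \<Sum>p\<in>UNIV. W$p$r * (x$p * (x$p - x$r)))"
    unfolding S_def by (rule sum.swap)
  also have "\<dots> = (\<Sum>p\<in>UNIV. \<Sum>r\<in>UNIV. W$p$r * (x$r * (x$r - x$p)))"
    by (simp add: s)
  finally have "2 * S = (\<Sum>p\<in>UNIV. \<Sum>r\<in>UNIV. W$p$r * (x$p * (x$p - x$r))) + (\<Sum>p\<in>UNIV. \<Sum>r\<in>UNIV. W$p$r * (x$r * (x$r - x$p)))"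
    unfolding S_def by simp
  also have "\<dots> = (\<Sum>p\<in>UNIV. \<Sum>r\<in>UNIV. W$p$r * (x$p - x$r)^2)"
    by (simp add: sum.distrib[symmetric] power2_eq_square algebra_simps)
  finally show ?thesis using 1 by simp
qed

lemma lap_psd:
  assumes "weight_matrix W"
  shows "0 \<le> x \<bullet> (laplacian W *v x)"
  using assms unfolding lap_quad[OF assms]
  by (auto intro!: sum_nonneg mult_nonneg_nonneg simp: weight_matrix_def)

lemma lap_ker:
  assumes "weight_matrix W" "graph_connected W" "x \<bullet> (laplacian W *v x) = 0"
  shows "x$p = x$q"
proof -
  have nn: "\<And>p r. 0 \<le> W$p$r * (x$p - x$r)^2" using assms(1) by (simp add: weight_matrix_def)
  have "(\<Sum>p\<in>UNIV. \<Sum>r\<in>UNIV. W$p$r * (x$p - x$r)^2) = 0"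
    using assms(3) lap_quad[OF assms(1)] by simp
  then have z: "\<And>p r. W$p$r * (x$p - x$r)^2 = 0"
    by (simp add: sum_nonneg_eq_0_iff sum_nonneg nn)
  have edge: "x$a = x$b" if "0 < W$a$b" for a b
    using z[of a b] that by simp
  have "(p, q) \<in> {(a, b). 0 < W $ a $ b}\<^sup>*" using assms(2) by (simp add: graph_connected_def)
  then show ?thesis
    by (induction rule: rtrancl_induct) (auto dest: edge)
qed


definition Emat :: "real^'n^'n" where "Emat = (\<chi> i j. 1 / real CARD('n))"

lemma inner_one: "(1::real^'n) \<bullet> x = (\<Sum>i\<in>UNIV. x$i)"
  by (simp add: inner_vec_def)

lemma E_mv: "Emat *v x = (((1::real^'n) \<bullet> x) / real CARD('n)) *\<^sub>R (1::real^'n)"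
  by (simp add: Emat_def inner_one matrix_vector_mult_def vec_eq_iff sum_divide_distrib)

lemma E_one: "Emat *v (1::real^'n) = 1"
  by (simp add: E_mv inner_one)

lemma E_perp: "(1::real^'n) \<bullet> x = 0 \<Longrightarrow> Emat *v x = 0"
  by (simp add: E_mv)

lemma E_sym: "transpose (Emat::real^'n^'n) = Emat"
  by (simp add: Emat_def transpose_def vec_eq_iff)

lemma sym_inner: "transpose (A::real^'n^'n) = A \<Longrightarrow> x \<bullet> (A *v y) = (A *v x) \<bullet> y"
  by (metis dot_lmul_matrix transpose_matrix_vector)

lemma one_inner_sym: "transpose (A::real^'n^'n) = A \<Longrightarrow> A *v 1 = 0 \<Longrightarrow> (1::real^'n) \<bullet> (A *v y) = 0"
  by (simp add: sym_inner)

lemma E_E: "Emat ** Emat = (Emat::real^'n^'n)"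
proof -
  have "Emat *v (Emat *v x) = Emat *v x" for x :: "real^'n"
    by (metis E_mv E_one matrix_vector_mult_scaleR)
  then show ?thesis by (simp add: matrix_eq flip: matrix_vector_mul_assoc)
qed


lemma mm_add_r: "((A::real^'n^'n) + B) ** C = A ** C + B ** C"
  by (vector matrix_matrix_mult_def sum.distrib[symmetric] field_simps)
lemma mm_sub_l: "(A::real^'n^'n) ** (B - C) = A ** B - A ** C"
  by (vector matrix_matrix_mult_def sum_subtractf[symmetric] field_simps)
lemma mm_sub_r: "((A::real^'n^'n) - B) ** C = A ** C - B ** C"
  by (vector matrix_matrix_mult_def sum_subtractf[symmetric] field_simps)

lemma pinv_unique:
  fixes A X Y :: "real^'n^'n"
  assumes X: "is_pinv A X" and Y: "is_pinv A Y"
  shows "X = Y"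
proof -
  have X1: "A ** X ** A = A" and X2: "X ** A ** X = X" and X3: "transpose (A ** X) = A ** X"
    and X4: "transpose (X ** A) = X ** A" using X by (auto simp: is_pinv_def)
  have Y1: "A ** Y ** A = A" and Y2: "Y ** A ** Y = Y" and Y3: "transpose (A ** Y) = A ** Y"
    and Y4: "transpose (Y ** A) = Y ** A" using Y by (auto simp: is_pinv_def)
  have AX: "A ** X = A ** Y"
  proof -
    have "A ** X = transpose (A ** X)" using X3 by simp
    also have "\<dots> = transpose X ** transpose A" by (simp add: matrix_transpose_mul)
    also have "\<dots> = transpose X ** transpose (A ** Y ** A)" using Y1 by simp
    also have "\<dots> = transpose X ** (transpose A ** transpose (A ** Y))"
      by (simp add: matrix_transpose_mul matrix_mul_assoc)
    also have "\<dots> = transpose (A ** X) ** transpose (A ** Y)"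
      by (simp add: matrix_transpose_mul matrix_mul_assoc)
    also have "\<dots> = (A ** X) ** (A ** Y)" using X3 Y3 by simp
    also have "\<dots> = (A ** X ** A) ** Y" by (simp add: matrix_mul_assoc)
    also have "\<dots> = A ** Y" using X1 by simp
    finally show ?thesis .
  qed
  have XA: "X ** A = Y ** A"
  proof -
    have "X ** A = transpose (X ** A)" using X4 by simp
    also have "\<dots> = transpose A ** transpose X" by (simp add: matrix_transpose_mul)
    also have "\<dots> = transpose (A ** Y ** A) ** transpose X" using Y1 by simp
    also have "\<dots> = transpose (Y ** A) ** (transpose A ** transpose X)"
      by (simp add: matrix_transpose_mul matrix_mul_assoc)
    also have "\<dots> = transpose (Y ** A) ** transpose (X ** A)"
      by (simp add: matrix_transpose_mul matrix_mul_assoc)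
    also have "\<dots> = (Y ** A) ** (X ** A)" using X4 Y4 by simp
    also have "\<dots> = Y ** (A ** X ** A)" by (simp add: matrix_mul_assoc)
    also have "\<dots> = Y ** A" using X1 by simp
    finally show ?thesis .
  qed
  have "X = X ** A ** X" using X2 by simp
  also have "\<dots> = X ** (A ** Y)" by (metis AX matrix_mul_assoc)
  also have "\<dots> = Y ** A ** Y" using XA by (simp add: matrix_mul_assoc)
  also have "\<dots> = Y" using Y2 by simp
  finally show ?thesis .
qed

lemma pinv_eq: "is_pinv A X \<Longrightarrow> pinv A = (X::real^'n^'n)"
  unfolding pinv_def by (rule the_equality) (auto intro: pinv_unique)

lemma lap_pinv_props:
  fixes W :: "real^'n^'n"
  assumes w: "weight_matrix W" and c: "graph_connected W"
  shows "transpose (pinv (laplacian W)) = pinv (laplacian W)"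
    and "pinv (laplacian W) *v 1 = 0"
    and "\<And>y. (1::real^'n) \<bullet> y = 0 \<Longrightarrow> y \<noteq> 0 \<Longrightarrow> 0 < y \<bullet> (pinv (laplacian W) *v y)"
    and "\<And>y. (1::real^'n) \<bullet> y = 0 \<Longrightarrow> laplacian W *v (pinv (laplacian W) *v y) = y"
proof -
  define L where "L = laplacian W"
  define E where "E = (Emat :: real^'n^'n)"
  define K where "K = L + E"
  have Ls: "transpose L = L" using lap_sym[OF w] by (simp add: L_def)
  have Es: "transpose E = E" by (simp add: E_def E_sym)
  have Ks: "transpose K = K" using Ls Es by (simp add: K_def transpose_def vec_eq_iff)
  have L1: "L *v 1 = 0" by (simp add: L_def lap_one)
  have E1: "E *v 1 = 1" by (simp add: E_def E_one)
  have n0: "real CARD('n) > 0" by simp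
  have Kq: "z \<bullet> (K *v z) = z \<bullet> (L *v z) + ((1::real^'n) \<bullet> z)^2 / real CARD('n)" for z
    by (simp add: K_def E_def E_mv algebra_simps power2_eq_square inner_commute)
  have Kpos: "0 < z \<bullet> (K *v z)" if "z \<noteq> 0" for z
  proof (rule ccontr)
    assume "\<not> 0 < z \<bullet> (K *v z)"
    moreover have "0 \<le> z \<bullet> (L *v z)" using lap_psd[OF w] by (simp add: L_def)
    moreover have "0 \<le> ((1::real^'n) \<bullet> z)^2 / real CARD('n)" by simp
    ultimately have a: "z \<bullet> (L *v z) = 0" and b: "((1::real^'n) \<bullet> z)^2 / real CARD('n) = 0"
      using Kq[of z] by linarith+
    from b have b': "(\<Sum>i\<in>UNIV. z$i) = 0" by (simp add: inner_one)
    obtain p :: 'n where True by simp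
    have const: "z$i = z$p" for i using lap_ker[OF w c, of z] a by (simp add: L_def)
    have "(\<Sum>i\<in>UNIV. z$i) = (\<Sum>i\<in>(UNIV::'n set). z$p)" by (rule sum.cong[OF refl], rule const)
    then have "(\<Sum>i\<in>UNIV. z$i) = real CARD('n) * z$p" by simp
    with b' have "z$p = 0" by simp
    then have "z = 0" using const by (simp add: vec_eq_iff)
    with that show False by simp
  qed
  have "inj ((*v) K)"
  proof (rule injI)
    fix x y assume "K *v x = K *v y"
    then have "K *v (x - y) = 0" by (simp add: matrix_vector_mult_diff_distrib)
    then show "x = y" using Kpos[of "x - y"] by (cases "x - y = 0") auto
  qed
  then have "det K \<noteq> 0" using det_nz_iff_inj[of "(*v) K"] by simp
  then have "invertible K" by (simp add: invertible_det_nz)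
  then obtain Ki where KKi: "K ** Ki = mat 1" and KiK: "Ki ** K = mat 1"
    unfolding invertible_def by blast
  have LE: "L ** E = 0"
  proof -
    have "L *v (E *v x) = 0" for x
      by (simp add: E_def E_mv matrix_vector_mult_scaleR L1)
    then show ?thesis by (simp add: matrix_eq flip: matrix_vector_mul_assoc)
  qed
  have EL: "E ** L = 0"
  proof -
    have "E *v (L *v x) = 0" for x
      using one_inner_sym[OF Ls L1, of x] by (simp add: E_def E_mv)
    then show ?thesis by (simp add: matrix_eq flip: matrix_vector_mul_assoc)
  qed
  have EE: "E ** E = E" by (simp add: E_def E_E)
  have KE: "K ** E = E" by (simp add: K_def LE EE mm_add_r)
  have EK: "E ** K = E" by (simp add: K_def EL EE matrix_add_ldistrib)
  have KiE: "Ki ** E = E" by (metis KE KiK matrix_mul_assoc matrix_mul_lid)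
  have EKi: "E ** Ki = E" by (metis EK KKi matrix_mul_assoc matrix_mul_rid)
  define X where "X = Ki - E"
  have LX: "L ** X = mat 1 - E"
  proof -
    have "L = K - E" by (simp add: K_def)
    then have "L ** X = (K - E) ** (Ki - E)" by (simp add: X_def)
    also have "\<dots> = K ** Ki - K ** E - E ** Ki + E ** E"
      by (simp add: mm_sub_l mm_sub_r)
    also have "\<dots> = mat 1 - E" by (simp add: KKi KE EKi EE)
    finally show ?thesis .
  qed
  have XL: "X ** L = mat 1 - E"
  proof -
    have "L = K - E" by (simp add: K_def)
    then have "X ** L = (Ki - E) ** (K - E)" by (simp add: X_def)
    also have "\<dots> = Ki ** K - Ki ** E - E ** K + E ** E"
      by (simp add: mm_sub_l mm_sub_r)
    also have "\<dots> = mat 1 - E" by (simp add: KiK KiE EK EE)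
    finally show ?thesis .
  qed
  have IEs: "transpose (mat 1 - E) = mat 1 - E" using Es by (simp add: transpose_def vec_eq_iff mat_def)
  have "is_pinv L X"
  proof -
    have "L ** X ** L = L" using LX EL by (simp add: mm_sub_r)
    moreover have "X ** L ** X = X"
    proof -
      have "E ** X = 0" by (simp add: X_def mm_sub_l EKi EE)
      then show ?thesis using XL by (simp add: mm_sub_r)
    qed
    ultimately show ?thesis using LX XL IEs by (simp add: is_pinv_def)
  qed
  then have P: "pinv L = X" by (rule pinv_eq)
  have Kis: "transpose Ki = Ki"
  proof -
    have "transpose Ki = transpose Ki ** (K ** Ki)" by (simp add: KKi)
    also have "\<dots> = transpose (K ** Ki) ** Ki" by (simp add: matrix_transpose_mul Ks matrix_mul_assoc)
    also have "\<dots> = Ki" by (simp add: KKi)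
    finally show ?thesis .
  qed
  show "transpose (pinv (laplacian W)) = pinv (laplacian W)"
    using Kis Es by (simp add: P[unfolded L_def] X_def transpose_def vec_eq_iff)
  have K1: "K *v 1 = 1" by (simp add: K_def matrix_vector_mult_add_rdistrib L1 E1)
  have Ki1: "Ki *v 1 = 1" by (metis K1 KiK matrix_vector_mul_assoc matrix_vector_mul_lid)
  show "pinv (laplacian W) *v 1 = 0"
    by (simp add: P[unfolded L_def] X_def matrix_vector_mult_diff_rdistrib Ki1 E1)
  fix y :: "real^'n" assume y1: "1 \<bullet> y = 0"
  have Ey: "E *v y = 0" using y1 by (simp add: E_def E_perp)
  show "laplacian W *v (pinv (laplacian W) *v y) = y"
    using Ey by (simp add: L_def[symmetric] P matrix_vector_mul_assoc LX matrix_vector_mult_diff_rdistrib)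
  assume "y \<noteq> 0"
  define z where "z = Ki *v y"
  have yz: "y = K *v z" by (simp add: z_def matrix_vector_mul_assoc KKi)
  have "z \<noteq> 0" using \<open>y \<noteq> 0\<close> yz by auto
  have "y \<bullet> (pinv (laplacian W) *v y) = y \<bullet> z"
    using Ey by (simp add: L_def[symmetric] P X_def z_def matrix_vector_mult_diff_rdistrib)
  also have "\<dots> = z \<bullet> (K *v z)" by (simp add: yz inner_commute)
  finally show "0 < y \<bullet> (pinv (laplacian W) *v y)" using Kpos[OF \<open>z \<noteq> 0\<close>] by simp
qed


lemma eig_indep:
  fixes M :: "real^'n^'n" and g :: "real \<Rightarrow> real^'n"
  assumes "finite S" and "\<forall>c\<in>S. M *v g c = c *\<^sub>R g c \<and> g c \<noteq> 0"
  shows "\<forall>a. (\<Sum>c\<in>S. a c *\<^sub>R g c) = 0 \<longrightarrow> (\<forall>c\<in>S. a c = 0)"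
  using assms
proof (induction S rule: finite_induct)
  case empty
  then show ?case by simp
next
  case (insert d S)
  show ?case
  proof (intro allI impI)
    fix a assume s0: "(\<Sum>c\<in>insert d S. a c *\<^sub>R g c) = 0"
    then have s1: "a d *\<^sub>R g d + (\<Sum>c\<in>S. a c *\<^sub>R g c) = 0"
      using insert.hyps by simp
    have lin: "M *v (\<Sum>c\<in>S. a c *\<^sub>R g c) = (\<Sum>c\<in>S. (a c * c) *\<^sub>R g c)"
    proof -
      have "M *v (\<Sum>c\<in>S. a c *\<^sub>R g c) = (\<Sum>c\<in>S. M *v (a c *\<^sub>R g c))"
        by (rule linear_sum[OF matrix_vector_mul_linear])
      also have "\<dots> = (\<Sum>c\<in>S. (a c * c) *\<^sub>R g c)"
        using insert.prems by (intro sum.cong) (auto simp: matrix_vector_mult_scaleR)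
      finally show ?thesis .
    qed
    have "M *v (a d *\<^sub>R g d + (\<Sum>c\<in>S. a c *\<^sub>R g c)) - d *\<^sub>R (a d *\<^sub>R g d + (\<Sum>c\<in>S. a c *\<^sub>R g c)) = 0"
      using s1 by simp
    then have "(a d * d) *\<^sub>R g d + (\<Sum>c\<in>S. (a c * c) *\<^sub>R g c) - ((a d * d) *\<^sub>R g d + (\<Sum>c\<in>S. (d * a c) *\<^sub>R g c)) = 0"
      using insert.prems lin
      by (simp add: matrix_vector_right_distrib matrix_vector_mult_scaleR scaleR_right.sum algebra_simps)
    then have "(\<Sum>c\<in>S. (a c * c) *\<^sub>R g c) - (\<Sum>c\<in>S. (d * a c) *\<^sub>R g c) = 0"
      by simp
    then have "(\<Sum>c\<in>S. (a c * (c - d)) *\<^sub>R g c) = 0"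
      by (simp add: sum_subtractf[symmetric] algebra_simps scaleR_diff_left)
    moreover have pS: "\<forall>c\<in>S. M *v g c = c *\<^sub>R g c \<and> g c \<noteq> 0" using insert.prems by simp
    ultimately have "\<forall>c\<in>S. a c * (c - d) = 0"
      using insert.IH[OF pS, rule_format, of "\<lambda>c. a c * (c - d)"] by simp
    then have aS: "\<forall>c\<in>S. a c = 0" using insert.hyps by auto
    then have "a d *\<^sub>R g d = 0" using s1 by simp
    then have "a d = 0" using insert.prems by simp
    with aS show "\<forall>c\<in>insert d S. a c = 0" by simp
  qed
qed

lemma eig_finite:
  fixes M :: "real^'n^'n"
  shows "finite (real_eigenvalues M)"
proof (rule ccontr)
  assume "infinite (real_eigenvalues M)"
  then obtain S where S: "finite S" "card S = Suc CARD('n)" "S \<subseteq> real_eigenvalues M"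
    using infinite_arbitrarily_large by blast
  define g where "g c = (SOME v. v \<noteq> 0 \<and> M *v v = c *\<^sub>R v)" for c
  have g: "M *v g c = c *\<^sub>R g c \<and> g c \<noteq> 0" if "c \<in> S" for c
  proof -
    have "\<exists>v. v \<noteq> 0 \<and> M *v v = c *\<^sub>R v" using S(3) that by (auto simp: real_eigenvalues_def)
    then show ?thesis unfolding g_def by (metis (mono_tags, lifting) someI_ex)
  qed
  have inj: "inj_on g S"
  proof (rule inj_onI)
    fix c d assume cd: "c \<in> S" "d \<in> S" "g c = g d"
    have "c *\<^sub>R g c = d *\<^sub>R g c" using g[OF cd(1)] g[OF cd(2)] cd(3) by metis
    then have "(c - d) *\<^sub>R g c = 0" by (simp add: scaleR_diff_left)
    then show "c = d" using g[OF cd(1)] by simp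
  qed
  have "independent (g ` S)"
  proof -
    have "\<not> dependent (g ` S)"
    proof
      assume "dependent (g ` S)"
      then obtain u where u: "\<exists>v\<in>g ` S. u v \<noteq> 0" "(\<Sum>v\<in>g ` S. u v *\<^sub>R v) = 0"
        using real_vector.dependent_finite[of "g ` S"] S(1) by auto
      have "(\<Sum>c\<in>S. u (g c) *\<^sub>R g c) = 0"
        using u(2) by (simp add: sum.reindex[OF inj])
      moreover have "\<forall>c\<in>S. M *v g c = c *\<^sub>R g c \<and> g c \<noteq> 0" using g by blast
      ultimately have "\<forall>c\<in>S. u (g c) = 0"
        using eig_indep[OF S(1), of M g, rule_format, of "\<lambda>c. u (g c)"] by simp
      with u(1) show False by auto
    qed
    then show ?thesis by simp
  qed
  then have "card (g ` S) \<le> DIM(real^'n)" using independent_bound by blast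
  then have "card S \<le> CARD('n)" using card_image[OF inj] by simp
  with S(2) show False by simp
qed


lemma var_zero:
  fixes F :: "real^'n^'n"
  assumes Fs: "transpose F = F"
    and neg: "\<And>y. (1::real^'n) \<bullet> y = 0 \<Longrightarrow> y \<bullet> (F *v y) \<le> 0"
    and y0: "(1::real^'n) \<bullet> y0 = 0" and q0: "y0 \<bullet> (F *v y0) = 0"
    and perp: "(1::real^'n) \<bullet> (F *v y0) = 0"
  shows "F *v y0 = 0"
proof (rule ccontr)
  assume nz: "F *v y0 \<noteq> 0"
  define h where "h = F *v y0"
  define b where "b = h \<bullet> h"
  define a where "a = h \<bullet> (F *v h)"
  have bpos: "0 < b" using nz by (simp add: b_def h_def)
  have apos: "a \<le> 0" using neg[of h] perp by (simp add: a_def h_def)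
  have exp: "(y0 + t *\<^sub>R h) \<bullet> (F *v (y0 + t *\<^sub>R h)) = 2 * t * b + t^2 * a" for t
  proof -
    have s: "y0 \<bullet> (F *v h) = (F *v y0) \<bullet> h" using sym_inner[OF Fs] .
    show ?thesis
      using q0 s by (simp add: matrix_vector_right_distrib matrix_vector_mult_scaleR inner_add_left
          inner_add_right a_def b_def h_def power2_eq_square algebra_simps inner_commute)
  qed
  define t where "t = b / (1 - a)"
  have "1 \<bullet> (y0 + t *\<^sub>R h) = 0" using y0 perp by (simp add: h_def inner_add_right)
  then have le: "2 * t * b + t^2 * a \<le> 0" using neg exp by metis
  have d: "1 - a \<noteq> 0" using apos by simp
  have "2 * t * b + t^2 * a = b^2 * (2 - a) / (1 - a)^2"
    unfolding t_def using d by (simp add: divide_simps power2_eq_square) (simp add: algebra_simps)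
  moreover have "0 < b^2 * (2 - a) / (1 - a)^2" using apos bpos by simp
  ultimately show False using le by simp
qed

lemma quad_scale: "(c *\<^sub>R y) \<bullet> ((A::real^'n^'n) *v (c *\<^sub>R y)) = c^2 * (y \<bullet> (A *v y))"
  by (simp add: matrix_vector_mult_scaleR power2_eq_square)

lemma cont_quad: "continuous_on S (\<lambda>y. y \<bullet> ((A::real^'n^'n) *v y))"
  by (intro continuous_on_inner continuous_on_id linear_continuous_on matrix_vector_mul_bounded_linear)

theorem theorem3:
  fixes WX WY :: "real^'n^'n"
  assumes "CARD('n) \<ge> 2"
    and "weight_matrix WX" and "weight_matrix WY"
    and "graph_connected WX" and "graph_connected WY"
  shows "gammaF_min (laplacian WX) (laplacian WY)
           \<ge> 1 / lambda_max (pinv (laplacian WX) ** laplacian WY)"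
proof -
  define A where "A = pinv (laplacian WX)"
  define C where "C = pinv (laplacian WY)"
  define B where "B = laplacian WY"
  note PA = lap_pinv_props[OF assms(2,4), folded A_def]
  note PC = lap_pinv_props[OF assms(3,5), folded C_def B_def]
  obtain p0 :: 'n where True by simp
  obtain q0 :: 'n where "q0 \<noteq> p0"
  proof -
    have "UNIV \<noteq> {p0}" using assms(1) by (metis card.empty card_insert_disjoint empty_iff finite.emptyI numeral_le_one_iff semiring_norm(69) One_nat_def)
    then show ?thesis using that by blast
  qed
  have ed1: "(1::real^'n) \<bullet> e_diff p q = 0" for p q
    by (simp add: inner_one e_diff_def std_basis_def sum_subtractf)
  have ednz: "e_diff p q \<noteq> 0" if "p \<noteq> q" for p q :: 'n
  proof
    assume "e_diff p q = 0"
    then have "(e_diff p q)$p = 0" by simp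
    then show False using that by (simp add: e_diff_def std_basis_def)
  qed
  define QA where "QA y = y \<bullet> (A *v y)" for y
  define QC where "QC y = y \<bullet> (C *v y)" for y
  define R where "R y = QA y / QC y" for y
  define S where "S = {y::real^'n. 1 \<bullet> y = 0} \<inter> sphere 0 1"
  have QApos: "0 < QA y" if "1 \<bullet> y = 0" "y \<noteq> 0" for y
    using PA(3)[OF that] by (simp add: QA_def)
  have QCpos: "0 < QC y" if "1 \<bullet> y = 0" "y \<noteq> 0" for y
    using PC(3)[OF that] by (simp add: QC_def)
  have Sne: "S \<noteq> {}"
  proof -
    let ?y = "e_diff q0 p0 /\<^sub>R norm (e_diff q0 p0)"
    have "?y \<in> S" using ednz[OF \<open>q0 \<noteq> p0\<close>] ed1[of q0 p0] by (simp add: S_def)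
    then show ?thesis by blast
  qed
  have Sc: "compact S" unfolding S_def by (intro closed_Int_compact closed_hyperplane compact_sphere)
  have Rc: "continuous_on S R"
    unfolding R_def QA_def QC_def
  proof (intro continuous_on_divide cont_quad)
    show "\<forall>y\<in>S. y \<bullet> (C *v y) \<noteq> 0"
      using QCpos unfolding QC_def S_def by fastforce
  qed
  obtain y0 where y0S: "y0 \<in> S" and y0max: "\<And>y. y \<in> S \<Longrightarrow> R y \<le> R y0"
    using continuous_attains_sup[OF Sc Sne Rc] by blast
  define \<mu> where "\<mu> = R y0"
  have y01: "1 \<bullet> y0 = 0" and y0nz: "y0 \<noteq> 0" using y0S by (auto simp: S_def)
  have mupos: "0 < \<mu>" using QApos[OF y01 y0nz] QCpos[OF y01 y0nz] by (simp add: \<mu>_def R_def)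
  have bound: "QA y \<le> \<mu> * QC y" if "1 \<bullet> y = 0" for y
  proof (cases "y = 0")
    case True then show ?thesis by (simp add: QA_def QC_def)
  next
    case False
    define y' where "y' = (1 / norm y) *\<^sub>R y"
    have "y' \<in> S" using that False by (simp add: S_def y'_def inner_scaleR_right)
    then have "R y' \<le> \<mu>" using y0max by (simp add: \<mu>_def)
    moreover have "R y' = R y"
    proof -
      have a: "QA y' = (1 / norm y)^2 * QA y" unfolding QA_def y'_def by (rule quad_scale)
      have c: "QC y' = (1 / norm y)^2 * QC y" unfolding QC_def y'_def by (rule quad_scale)
      have "(1 / norm y)^2 \<noteq> 0" using False by simp
      then show ?thesis by (simp add: R_def a c)
    qed
    ultimately have "QA y / QC y \<le> \<mu>" by (simp add: R_def)
    then show ?thesis using QCpos[OF that False] by (simp add: divide_le_eq)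
  qed
  define F where "F = A - \<mu> *\<^sub>R C"
  have Fv: "F *v y = A *v y - \<mu> *\<^sub>R (C *v y)" for y
    by (simp add: F_def matrix_vector_mult_diff_rdistrib scaleR_matrix_vector_assoc)
  have Fs: "transpose F = F"
  proof -
    have "transpose F = transpose A - \<mu> *\<^sub>R transpose C"
      by (simp add: F_def transpose_def vec_eq_iff)
    then show ?thesis using PA(1) PC(1) by (simp add: F_def)
  qed
  have Fq: "y \<bullet> (F *v y) = QA y - \<mu> * QC y" for y
    by (simp add: Fv QA_def QC_def inner_diff_right)
  have "F *v y0 = 0"
  proof (rule var_zero[OF Fs _ y01])
    show "\<And>y. 1 \<bullet> y = 0 \<Longrightarrow> y \<bullet> (F *v y) \<le> 0" using bound by (simp add: Fq)
    show "y0 \<bullet> (F *v y0) = 0"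
      using QCpos[OF y01 y0nz] by (simp add: Fq \<mu>_def R_def)
    show "1 \<bullet> (F *v y0) = 0"
      using one_inner_sym[OF PA(1) PA(2)] one_inner_sym[OF PC(1) PC(2)]
      by (simp add: Fv inner_diff_right)
  qed
  then have Ay0: "A *v y0 = \<mu> *\<^sub>R (C *v y0)" by (simp add: Fv)
  define v where "v = C *v y0"
  have vnz: "v \<noteq> 0" using QCpos[OF y01 y0nz] by (auto simp: QC_def v_def)
  have "(A ** B) *v v = \<mu> *\<^sub>R v"
    using PC(4)[OF y01] Ay0 by (simp add: v_def flip: matrix_vector_mul_assoc)
  then have "\<mu> \<in> real_eigenvalues (A ** B)" using vnz by (auto simp: real_eigenvalues_def)
  then have mule: "\<mu> \<le> lambda_max (A ** B)"
    unfolding lambda_max_def by (rule Max_ge[OF eig_finite])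
  have each: "1 / lambda_max (A ** B) \<le> gammaF (laplacian WX) (laplacian WY) p q" if "p \<noteq> q" for p q
  proof -
    define x where "x = e_diff p q"
    have x1: "1 \<bullet> x = 0" and xnz: "x \<noteq> 0" using ed1 ednz[OF that] by (auto simp: x_def)
    have g: "gammaF (laplacian WX) (laplacian WY) p q = QC x / QA x"
      by (simp add: gammaF_def eff_res_def QA_def QC_def A_def C_def x_def)
    have "1 / \<mu> \<le> QC x / QA x"
      using bound[OF x1] QApos[OF x1 xnz] QCpos[OF x1 xnz] mupos
      by (simp add: divide_simps mult.commute)
    moreover have "1 / lambda_max (A ** B) \<le> 1 / \<mu>"
      using mule mupos by (simp add: frac_le)
    ultimately show ?thesis using g by simp
  qed
  have fin: "finite {gammaF (laplacian WX) (laplacian WY) p q | p q. p \<noteq> q}"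
  proof (rule finite_subset)
    show "{gammaF (laplacian WX) (laplacian WY) p q | p q. p \<noteq> q} \<subseteq> (\<lambda>(p, q). gammaF (laplacian WX) (laplacian WY) p q) ` UNIV"
      by auto
  qed simp
  have ne: "{gammaF (laplacian WX) (laplacian WY) p q | p q. p \<noteq> q} \<noteq> {}"
    using \<open>q0 \<noteq> p0\<close> by blast
  have "1 / lambda_max (A ** B) \<le> Min {gammaF (laplacian WX) (laplacian WY) p q | p q. p \<noteq> q}"
    using each by (auto simp: Min_ge_iff[OF fin ne])
  then show ?thesis by (simp add: gammaF_min_def A_def B_def)
qed

end
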